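(* Let $d,M$ be positive integers with $M\ge2$ and let $\mathcal{V}_J=\{v_j(\mathbf{z},\mathbf{y}_M,\dots,\mathbf{y}_1):j\in J\}$ be a family of real-valued functions on $(\mathbb{R}^d)^{M+1}$ satisfying (b1), (b4), (b5) and (b6). Then for any $r$ with $2\le r\le M$, any $(\boldsymbol{\beta}_M,\dots,\boldsymbol{\beta}_1)\in(\mathbb{R}^d)^M$, any positive-measure set $\mathcal{Z}_r\subset(\mathbb{R}^d)^r$ and any finite $S_0\subset J^r$: the family $\{v_{j_r}(\mathbf{z}_r,\dots,\mathbf{z}_1,\boldsymbol{\beta}_M,\dots,\boldsymbol{\beta}_r)\cdots v_{j_1}(\mathbf{z}_1,\boldsymbol{\beta}_M,\dots,\boldsymbol{\beta}_1):(j_r,\dots,j_1)\in S_0\}$ contains linearly dependent functions (on $(\mathbf{z}_r,\dots,\mathbf{z}_1)\in\mathcal{Z}_r$) only if there exists $\ell\le r$ such that the family $\{v_{j_\ell}(\mathbf{z}_\ell,\dots,\mathbf{z}_1,\boldsymbol{\beta}_M,\dots,\boldsymbol{\beta}_\ell):j_\ell\in J_\ell\}$, where $J_\ell=\{j_\ell\in J:\exists(j_r,\dots,j_1)\in S_0\text{ with this }j_\ell\}$, contains linearly dependent functions on $(\mathbf{z}_\ell,\dots,\mathbf{z}_1)\in\pi_{\{\ell,\dots,1\}}(\mathcal{Z}_r)$.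
   Context: Measures are Lebesgue. Linear dependence of a finite family on a set $D$ means some nontrivial linear combination vanishes at every point of $D$. $\pi_{\{\ell,\dots,1\}}(\mathcal{Z}_r)=\{(\mathbf{z}_\ell,\dots,\mathbf{z}_1):(\mathbf{z}_r,\dots,\mathbf{z}_1)\in\mathcal{Z}_r\}$ is the coordinate projection. Each factor $v_{j_\ell}(\mathbf{z}_\ell,\mathbf{z}_{\ell-1},\dots,\mathbf{z}_1,\boldsymbol{\beta}_M,\dots,\boldsymbol{\beta}_\ell)$ denotes $v_{j_\ell}$ with first argument $\mathbf{z}_\ell$ and remaining $M$ arguments (in order) $\mathbf{z}_{\ell-1},\dots,\mathbf{z}_1,\boldsymbol{\beta}_M,\dots,\boldsymbol{\beta}_\ell$. Assumptions: (b1) $v_j>0$ everywhere for all $j$. (b4) There is a full-measure $\mathcal{Y}\subset(\mathbb{R}^d)^M$ such that for all positive-measure $\mathcal{Y}'\subset\mathcal{Y}$, $\mathcal{Z}\subset\mathbb{R}^d$, every finite subfamily of $\mathcal{V}_J$ is linearly independent on $\mathcal{Z}\times\mathcal{Y}'$. (b5) For any $1\le\ell\le M$, $(\boldsymbol{\beta}_\ell,\dots,\boldsymbol{\beta}_1)\in(\mathbb{R}^d)^\ell$, positive-measure $\mathcal{Z}\subset\mathbb{R}^d$, $\mathcal{Y}\subset(\mathbb{R}^d)^{M-\ell}$, and finite $J_0\subset J$: $\{v_j(\mathbf{z},\mathbf{y}_M,\dots,\mathbf{y}_{\ell+1},\boldsymbol{\beta}_\ell,\dots,\boldsymbol{\beta}_1):j\in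 J_0\}$ is linearly dependent on $\mathcal{Z}\times\mathcal{Y}$ only if there are $j\ne j'\in J_0$ for which these two functions coincide on all of $(\mathbb{R}^d)^{M-\ell+1}$. (b6) Each $v_j$ is continuous in $(\mathbf{y}_M,\dots,\mathbf{y}_1)$. *)

theory Defs
  imports "HOL-Analysis.Analysis"
begin

text \<open>A point of (R^d)^k with coordinates indexed by a finite index set I (e.g. I = {1..k})
  is a function nat => 'a, extensional on I.\<close>
definition tupM :: "nat set \<Rightarrow> (nat \<Rightarrow> 'a::euclidean_space) measure" where
  "tupM I = completion (Pi\<^sub>M I (\<lambda>_. lborel))"

definition pos_meas :: "'b measure \<Rightarrow> 'b set \<Rightarrow> bool" where
  "pos_meas \<mu> A \<longleftrightarrow> A \<in> sets \<mu> \<and> emeasure \<mu> A > 0"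

definition full_meas :: "'b measure \<Rightarrow> 'b set \<Rightarrow> bool" where
  "full_meas \<mu> A \<longleftrightarrow> A \<in> sets \<mu> \<and> A \<subseteq> space \<mu> \<and> emeasure \<mu> (space \<mu> - A) = 0"

definition lin_dep_on :: "'p set \<Rightarrow> 'i set \<Rightarrow> ('i \<Rightarrow> 'p \<Rightarrow> real) \<Rightarrow> bool" where
  "lin_dep_on D F f \<longleftrightarrow>
     (\<exists>c. (\<exists>i\<in>F. c i \<noteq> 0) \<and> (\<forall>x\<in>D. (\<Sum>i\<in>F. c i * f i x) = 0))"

text \<open>The last M arguments (y_M,...,y_1) of v, stored as y i = y_i, for the call
  v(z, y_M,...,y_{l+1}, beta_l,...,beta_1): y_i for i > l, beta_i for i <= l.\<close>
definition comb_args :: "nat \<Rightarrow> nat \<Rightarrow> (nat \<Rightarrow> 'a) \<Rightarrow> (nat \<Rightarrow> 'a) \<Rightarrow> nat \<Rightarrow> 'a" where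
  "comb_args M l y \<beta> = restrict (\<lambda>i. if i \<le> l then \<beta> i else y i) {1..M}"

text \<open>The last M arguments for v_{j_l}(z_l, z_{l-1},...,z_1, beta_M,...,beta_l):
  position y_i (i = M..1) receives z_{i-(M+1-l)} if i > M+1-l, and beta_{i+l-1} otherwise.\<close>
definition fac_args :: "nat \<Rightarrow> nat \<Rightarrow> (nat \<Rightarrow> 'a) \<Rightarrow> (nat \<Rightarrow> 'a) \<Rightarrow> nat \<Rightarrow> 'a" where
  "fac_args M l z \<beta> =
     restrict (\<lambda>i. if M + 1 - l < i then z (i - (M + 1 - l)) else \<beta> (i + l - 1)) {1..M}"

definition fac :: "('j \<Rightarrow> 'a \<Rightarrow> (nat \<Rightarrow> 'a) \<Rightarrow> real) \<Rightarrow> nat \<Rightarrow> (nat \<Rightarrow> 'a) \<Rightarrow> nat \<Rightarrow> 'j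
                   \<Rightarrow> (nat \<Rightarrow> 'a) \<Rightarrow> real" where
  "fac v M \<beta> l j z = v j (z l) (fac_args M l z \<beta>)"

end

theory Submission
  imports Defs
begin

lemma reindex_PiM_lborel:
  assumes fin: "finite I" and bij: "bij_betw t J I"
  shows "distr (PiM I (\<lambda>_. lborel::'a::euclidean_space measure)) (PiM J (\<lambda>_. lborel))
           (\<lambda>\<omega>. \<lambda>n\<in>J. \<omega> (t n)) = PiM J (\<lambda>_. lborel)"
proof -
  interpret product_sigma_finite "\<lambda>_. lborel::'a measure"
    by (simp add: product_sigma_finite_def sigma_finite_lborel)
  have finJ: "finite J" using bij fin bij_betw_finite by blast
  have meas: "(\<lambda>\<omega>. \<lambda>n\<in>J. \<omega> (t n)) \<in> measurable (PiM I (\<lambda>_. lborel)) (PiM J (\<lambda>_. lborel::'a measure))"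
    by (rule measurable_restrict, rule measurable_component_singleton) (use bij in \<open>auto simp: bij_betw_def\<close>)
  show ?thesis
  proof (rule PiM_eqI[OF finJ])
    show "sets (distr (PiM I (\<lambda>_. lborel)) (PiM J (\<lambda>_. lborel)) (\<lambda>\<omega>. \<lambda>n\<in>J. \<omega> (t n))) = sets (PiM J (\<lambda>_. lborel::'a measure))"
      by simp
    fix A assume A: "\<And>i. i \<in> J \<Longrightarrow> A i \<in> sets (lborel::'a measure)"
    define s where "s = the_inv_into J t"
    have s: "\<And>i. i \<in> I \<Longrightarrow> s i \<in> J \<and> t (s i) = i" "\<And>n. n \<in> J \<Longrightarrow> s (t n) = n" "\<And>n. n \<in> J \<Longrightarrow> t n \<in> I"
      using bij unfolding s_def bij_betw_def
      by (auto simp: the_inv_into_f_f f_the_inv_into_f the_inv_into_into)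
    have pre: "(\<lambda>\<omega>. \<lambda>n\<in>J. \<omega> (t n)) -` PiE J A \<inter> space (PiM I (\<lambda>_. lborel)) = PiE I (\<lambda>i. A (s i))"
    proof (intro set_eqI iffI)
      fix x assume x: "x \<in> (\<lambda>\<omega>. \<lambda>n\<in>J. \<omega> (t n)) -` PiE J A \<inter> space (PiM I (\<lambda>_. lborel::'a measure))"
      then have ex: "x \<in> extensional I" by (simp add: space_PiM PiE_def)
      from x have xA: "\<And>n. n \<in> J \<Longrightarrow> x (t n) \<in> A n" by (auto simp: PiE_def Pi_def)
      have "\<And>i. i \<in> I \<Longrightarrow> x i \<in> A (s i)"
      proof -
        fix i assume i: "i \<in> I"
        then have "x (t (s i)) \<in> A (s i)" using xA s(1) by blast
        then show "x i \<in> A (s i)" using s(1) i by simp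
      qed
      then show "x \<in> PiE I (\<lambda>i. A (s i))" using ex by (simp add: PiE_def)
    next
      fix x assume x: "x \<in> PiE I (\<lambda>i. A (s i))"
      then have ex: "x \<in> extensional I" and xi: "\<And>i. i \<in> I \<Longrightarrow> x i \<in> A (s i)" by (auto simp: PiE_def)
      have "\<And>n. n \<in> J \<Longrightarrow> x (t n) \<in> A n"
      proof -
        fix n assume n: "n \<in> J"
        then have "x (t n) \<in> A (s (t n))" using xi s(3) by blast
        then show "x (t n) \<in> A n" using s(2) n by simp
      qed
      then have "(\<lambda>n\<in>J. x (t n)) \<in> PiE J A" by (simp add: PiE_def Pi_def)
      moreover have "x \<in> space (PiM I (\<lambda>_. lborel::'a measure))" using ex by (simp add: space_PiM PiE_def)
      ultimately show "x \<in> (\<lambda>\<omega>. \<lambda>n\<in>J. \<omega> (t n)) -` PiE J A \<inter> space (PiM I (\<lambda>_. lborel::'a measure))" by simp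
    qed
    have "emeasure (distr (PiM I (\<lambda>_. lborel)) (PiM J (\<lambda>_. lborel)) (\<lambda>\<omega>. \<lambda>n\<in>J. \<omega> (t n))) (PiE J A)
        = emeasure (PiM I (\<lambda>_. lborel)) (PiE I (\<lambda>i. A (s i)))"
      using A by (subst emeasure_distr[OF meas]) (auto simp: pre intro!: sets_PiM_I_finite[OF finJ])
    also have "\<dots> = (\<Prod>i\<in>I. emeasure lborel (A (s i)))"
      using A s fin by (intro emeasure_PiM) auto
    also have "\<dots> = (\<Prod>n\<in>J. emeasure lborel (A n))"
    proof -
      have "(\<Prod>n\<in>J. emeasure lborel (A (s (t n)))) = (\<Prod>i\<in>I. emeasure lborel (A (s i)))"
        by (rule prod.reindex_bij_betw[OF bij])
      moreover have "(\<Prod>n\<in>J. emeasure lborel (A (s (t n)))) = (\<Prod>n\<in>J. emeasure (lborel::'a measure) (A n))"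
        by (rule prod.cong) (simp_all add: s(2))
      ultimately show ?thesis by simp
    qed
    finally show "emeasure (distr (PiM I (\<lambda>_. lborel)) (PiM J (\<lambda>_. lborel)) (\<lambda>\<omega>. \<lambda>n\<in>J. \<omega> (t n))) (PiE J A) = (\<Prod>n\<in>J. emeasure lborel (A n))" .
  qed
qed

lemma closedin_PiM_sets:
  fixes S :: "(nat \<Rightarrow> 'a::euclidean_space) set"
  assumes "closedin (top_of_set (PiE I (\<lambda>_. UNIV))) S"
  shows "S \<in> sets (PiM I (\<lambda>_. lborel))"
proof -
  obtain C where C: "closed C" "S = PiE I (\<lambda>_. UNIV) \<inter> C"
    using assms by (auto simp: closedin_closed)
  define R where "R = (\<lambda>y::nat \<Rightarrow> 'a. \<lambda>i. if i \<in> I then y i else undefined)"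
  have "R \<in> borel_measurable (PiM I (\<lambda>_. lborel))"
    unfolding R_def
  proof (rule measurable_coordinatewise_then_product)
    fix i
    show "(\<lambda>x. if i \<in> I then x i else undefined) \<in> borel_measurable (PiM I (\<lambda>_. lborel::'a measure))"
      by (cases "i \<in> I") (auto simp: measurable_component_singleton[where M="\<lambda>_. lborel", simplified])
  qed
  then have "R -` C \<inter> space (PiM I (\<lambda>_. lborel)) \<in> sets (PiM I (\<lambda>_. lborel))"
    using C(1) by (intro measurable_sets) auto
  also have "R -` C \<inter> space (PiM I (\<lambda>_. lborel)) = S"
  proof -
    have RR: "\<And>x. x \<in> PiE I (\<lambda>_. UNIV) \<Longrightarrow> R x = x"
      by (auto simp: R_def PiE_def extensional_def)
    have RP: "\<And>x. R x \<in> PiE I (\<lambda>_. UNIV)"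
      by (auto simp: R_def PiE_def extensional_def)
    show ?thesis using C(2) RR RP by (auto simp: space_PiM)
  qed
  finally show ?thesis .
qed

lemma fac_args_local:
  assumes "\<And>i. 1 \<le> i \<Longrightarrow> i < l \<Longrightarrow> z i = z' i"
  shows "fac_args M l z \<beta> = fac_args M l z' \<beta>"
  unfolding fac_args_def
proof (rule restrict_ext)
  fix i assume i: "i \<in> {1..(M::nat)}"
  show "(if M + 1 - l < i then z (i - (M + 1 - l)) else \<beta> (i + l - 1)) =
        (if M + 1 - l < i then z' (i - (M + 1 - l)) else \<beta> (i + l - 1))"
    using i assms[of "i - (M + 1 - l)"] by auto
qed

lemma fac_local:
  assumes "1 \<le> l" "\<And>i. 1 \<le> i \<Longrightarrow> i \<le> l \<Longrightarrow> z i = z' i"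
  shows "fac v M \<beta> l j z = fac v M \<beta> l j z'"
proof -
  have "fac_args M l z \<beta> = fac_args M l z' \<beta>"
    using assms by (intro fac_args_local) auto
  moreover have "z l = z' l" using assms by auto
  ultimately show ?thesis by (simp add: fac_def)
qed

lemma comb_args_local:
  assumes "\<And>i. Suc l \<le> i \<Longrightarrow> i \<le> M \<Longrightarrow> y i = y' i"
  shows "comb_args M l y b = comb_args M l y' b"
  unfolding comb_args_def
  by (rule restrict_ext) (use assms in auto)

lemma fac_args_comb:
  assumes "1 \<le> l" "l \<le> M"
  shows "fac_args M l z \<beta> =
    comb_args M (M + 1 - l) (restrict (\<lambda>i. z (i - (M + 1 - l))) {Suc (M + 1 - l)..M}) (\<lambda>i. \<beta> (i + l - 1))"
  unfolding fac_args_def comb_args_def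
  by (rule restrict_ext) (use assms in auto)

lemma comb_args_M:
  "comb_args M M y (fac_args M l z \<beta>) = fac_args M l z \<beta>"
  unfolding comb_args_def fac_args_def by (rule ext) auto

lemma fac_args_PiE: "fac_args M l z \<beta> \<in> PiE {1..M} (\<lambda>_. UNIV)"
  unfolding fac_args_def by simp

lemma lin_dep_pair:
  assumes "finite F" "j \<in> F" "j' \<in> F" "j \<noteq> j'" "\<And>x. x \<in> D \<Longrightarrow> f j x = f j' x"
  shows "lin_dep_on D F f"
  unfolding lin_dep_on_def
proof (intro exI conjI ballI)
  let ?c = "\<lambda>i. if i = j then 1 else if i = j' then -1 else (0::real)"
  show "\<exists>i\<in>F. ?c i \<noteq> 0" using assms by auto
  fix x assume x: "x \<in> D"
  have "(\<Sum>i\<in>F. ?c i * f i x) = (\<Sum>i\<in>{j,j'}. ?c i * f i x)"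
    using assms by (intro sum.mono_neutral_right) auto
  also have "\<dots> = f j x - f j' x" using assms by simp
  also have "\<dots> = 0" using assms x by simp
  finally show "(\<Sum>i\<in>F. ?c i * f i x) = 0" .
qed

lemma main_ind:
  fixes v :: "'j \<Rightarrow> 'a::euclidean_space \<Rightarrow> (nat \<Rightarrow> 'a) \<Rightarrow> real"
    and J :: "'j set" and M :: nat and \<beta> :: "nat \<Rightarrow> 'a"
  assumes b5: "\<And>l \<beta> Z Y J0. 1 \<le> l \<Longrightarrow> l \<le> M \<Longrightarrow> pos_meas lebesgue Z \<Longrightarrow>
              pos_meas (tupM {Suc l..M}) Y \<Longrightarrow> finite J0 \<Longrightarrow> J0 \<subseteq> J \<Longrightarrow>
              lin_dep_on (Z \<times> Y) J0 (\<lambda>j (z, y). v j z (comb_args M l y \<beta>)) \<Longrightarrow>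
              (\<exists>j\<in>J0. \<exists>j'\<in>J0. j \<noteq> j' \<and>
                 (\<forall>z. \<forall>y\<in>PiE {Suc l..M} (\<lambda>_. UNIV).
                    v j z (comb_args M l y \<beta>) = v j' z (comb_args M l y \<beta>)))"
    and b6: "\<And>j z. j \<in> J \<Longrightarrow> continuous_on (PiE {1..M} (\<lambda>_. UNIV)) (v j z)"
  shows "r \<le> M \<Longrightarrow> Zr \<in> sets (PiM {1..r} (\<lambda>_. lborel::'a measure)) \<Longrightarrow>
    0 < emeasure (PiM {1..r} (\<lambda>_. lborel::'a measure)) Zr \<Longrightarrow> finite S0 \<Longrightarrow>
    S0 \<subseteq> PiE {1..r} (\<lambda>_. J) \<Longrightarrow>
    lin_dep_on Zr S0 (\<lambda>s z. \<Prod>l\<in>{1..r}. fac v M \<beta> l (s l) z) \<Longrightarrow>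
    \<exists>l\<in>{1..r}. \<exists>j\<in>(\<lambda>s. s l) ` S0. \<exists>j'\<in>(\<lambda>s. s l) ` S0. j \<noteq> j' \<and>
       (\<forall>z. fac v M \<beta> l j z = fac v M \<beta> l j' z)"
proof (induction r arbitrary: Zr S0)
  case 0
  from 0(6) obtain c where c: "\<exists>i\<in>S0. c i \<noteq> 0"
    "\<forall>x\<in>Zr. (\<Sum>i\<in>S0. c i * (\<Prod>l\<in>{1..0}. fac v M \<beta> l (i l) x)) = 0"
    unfolding lin_dep_on_def by blast
  then obtain s where s: "s \<in> S0" "c s \<noteq> 0" by blast
  have S0: "S0 = {s}" using 0(5) s(1) by auto
  have "Zr \<noteq> {}" using 0(3) by auto
  then obtain x where "x \<in> Zr" by blast
  with c(2) S0 s show ?case by simp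
next
  case (Suc r)
  let ?P = "PiM {1..r} (\<lambda>_. lborel::'a measure)"
  let ?P1 = "PiM {1..Suc r} (\<lambda>_. lborel::'a measure)"
  interpret PS: product_sigma_finite "\<lambda>_. lborel::'a measure"
    by (simp add: product_sigma_finite_def sigma_finite_lborel)
  have rM: "r < M" using Suc.prems(1) by simp
  from Suc.prems(6) obtain c where c: "\<exists>i\<in>S0. c i \<noteq> 0"
    "\<forall>x\<in>Zr. (\<Sum>s\<in>S0. c s * (\<Prod>l\<in>{1..Suc r}. fac v M \<beta> l (s l) x)) = 0"
    unfolding lin_dep_on_def by blast
  define Q where "Q = (\<lambda>s. s (Suc r)) ` S0"
  have QJ: "Q \<subseteq> J" using Suc.prems(5) unfolding Q_def by (auto simp: PiE_iff)
  have finQ: "finite Q" using Suc.prems(4) unfolding Q_def by simp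
  define A where "A w = fac_args M (Suc r) w \<beta>" for w
  define C where "C q w = (\<Sum>s\<in>{s\<in>S0. s (Suc r) = q}. c s * (\<Prod>l\<in>{1..r}. fac v M \<beta> l (s l) w))" for q w
  define Zs where "Zs w = {x. w(Suc r := x) \<in> Zr}" for w
  have key_sum: "(\<Sum>s\<in>S0. c s * (\<Prod>l\<in>{1..Suc r}. fac v M \<beta> l (s l) (w(Suc r := x))))
      = (\<Sum>q\<in>Q. C q w * v q x (A w))" for w x
  proof -
    have f1: "fac v M \<beta> l j (w(Suc r := x)) = fac v M \<beta> l j w" if "l \<in> {1..r}" for l j
      using that by (intro fac_local) auto
    have f2: "fac v M \<beta> (Suc r) j (w(Suc r := x)) = v j x (A w)" for j
    proof -
      have "fac_args M (Suc r) (w(Suc r := x)) \<beta> = fac_args M (Suc r) w \<beta>"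
        by (intro fac_args_local) auto
      then show ?thesis by (simp add: fac_def A_def)
    qed
    have "(\<Sum>s\<in>S0. c s * (\<Prod>l\<in>{1..Suc r}. fac v M \<beta> l (s l) (w(Suc r := x))))
        = (\<Sum>s\<in>S0. c s * (\<Prod>l\<in>{1..r}. fac v M \<beta> l (s l) w) * v (s (Suc r)) x (A w))"
    proof (intro sum.cong refl)
      fix s assume "s \<in> S0"
      have "(\<Prod>l\<in>{1..r}. fac v M \<beta> l (s l) (w(Suc r := x))) = (\<Prod>l\<in>{1..r}. fac v M \<beta> l (s l) w)"
        by (rule prod.cong) (simp_all only: f1)
      then show "c s * (\<Prod>l\<in>{1..Suc r}. fac v M \<beta> l (s l) (w(Suc r := x))) =
          c s * (\<Prod>l\<in>{1..r}. fac v M \<beta> l (s l) w) * v (s (Suc r)) x (A w)"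
        by (simp add: f2 mult.assoc)
    qed
    also have "\<dots> = (\<Sum>q\<in>Q. \<Sum>s\<in>{s\<in>S0. s (Suc r) = q}. c s * (\<Prod>l\<in>{1..r}. fac v M \<beta> l (s l) w) * v (s (Suc r)) x (A w))"
      unfolding Q_def by (rule sum.image_gen[OF Suc.prems(4)])
    also have "\<dots> = (\<Sum>q\<in>Q. C q w * v q x (A w))"
      unfolding C_def sum_distrib_right by (intro sum.cong refl) auto
    finally show ?thesis .
  qed
  have ins: "{1..Suc r} = insert (Suc r) {1..r}" by auto
  have Zr1: "Zr \<in> sets (PiM (insert (Suc r) {1..r}) (\<lambda>_. lborel::'a measure))"
    unfolding ins[symmetric] by (rule Suc.prems(2))
  define G where "G w = (\<integral>\<^sup>+ x. indicator Zr (w(Suc r := x)) \<partial>(lborel::'a measure))" for w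
  have Gm: "G \<in> borel_measurable ?P"
  proof -
    have "(\<lambda>(w, x). indicator Zr (w(Suc r := x)) :: ennreal) \<in> borel_measurable (?P \<Otimes>\<^sub>M lborel)"
      using Zr1 by measurable
    then show ?thesis unfolding G_def by (rule lborel.borel_measurable_nn_integral[where f="\<lambda>w x. indicator Zr (w(Suc r := x))", simplified])
  qed
  have Zs_sets: "Zs w \<in> sets lborel" if "w \<in> space ?P" for w
  proof -
    have "(\<lambda>x. w(Suc r := x)) \<in> measurable lborel (PiM (insert (Suc r) {1..r}) (\<lambda>_. lborel::'a measure))"
      using that by (intro measurable_component_update) auto
    from measurable_sets[OF this Zr1] show ?thesis by (simp add: Zs_def vimage_def)
  qed
  have G_Zs: "G w = emeasure lborel (Zs w)" if "w \<in> space ?P" for w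
  proof -
    have "G w = (\<integral>\<^sup>+ x. indicator (Zs w) x \<partial>lborel)"
      unfolding G_def by (intro nn_integral_cong) (auto simp: Zs_def indicator_def)
    then show ?thesis using Zs_sets[OF that] by simp
  qed
  define E where "E = {w \<in> space ?P. 0 < G w}"
  have E_sets: "E \<in> sets ?P"
  proof -
    have "G -` {0<..} \<inter> space ?P \<in> sets ?P"
      by (rule measurable_sets[OF Gm]) auto
    moreover have "G -` {0<..} \<inter> space ?P = E" unfolding E_def by auto
    ultimately show ?thesis by simp
  qed
  have E_pos: "0 < emeasure ?P E"
  proof (rule ccontr)
    assume "\<not> 0 < emeasure ?P E"
    then have "E \<in> null_sets ?P" using E_sets by (auto simp: null_sets_def)
    have "emeasure ?P1 Zr = (\<integral>\<^sup>+ x. indicator Zr x \<partial>?P1)"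
      using Suc.prems(2) by simp
    also have "\<dots> = (\<integral>\<^sup>+ x. indicator Zr x \<partial>PiM (insert (Suc r) {1..r}) (\<lambda>_. lborel::'a measure))"
      by (simp only: ins)
    also have "\<dots> = (\<integral>\<^sup>+ w. G w \<partial>?P)"
      unfolding G_def using Zr1 by (intro PS.product_nn_integral_insert) auto
    also have "\<dots> = (\<integral>\<^sup>+ w. G w * indicator E w \<partial>?P)"
      by (intro nn_integral_cong) (auto simp: E_def indicator_def)
    also have "\<dots> = 0" by (rule nn_integral_null_set) fact
    finally show False using Suc.prems(3) by simp
  qed
  define K where "K q q' = {w \<in> space ?P. \<forall>x. v q x (A w) = v q' x (A w)}" for q q'
  have Am: "A \<in> measurable ?P (PiM {1..M} (\<lambda>_. lborel::'a measure))"
  proof -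
    have "(\<lambda>w. \<lambda>i\<in>{1..M}. if M + 1 - Suc r < i then w (i - (M + 1 - Suc r)) else \<beta> (i + Suc r - 1))
       \<in> measurable ?P (PiM {1..M} (\<lambda>_. lborel::'a measure))"
    proof (rule measurable_restrict)
      fix i assume i: "i \<in> {1..M}"
      show "(\<lambda>w. if M + 1 - Suc r < i then w (i - (M + 1 - Suc r)) else \<beta> (i + Suc r - 1)) \<in> measurable ?P (lborel::'a measure)"
      proof (cases "M + 1 - Suc r < i")
        case True
        then have "i - (M + 1 - Suc r) \<in> {1..r}" using i rM by auto
        then have "(\<lambda>w. w (i - (M + 1 - Suc r))) \<in> measurable ?P (lborel::'a measure)"
          by (rule measurable_component_singleton)
        then show ?thesis using True by simp
      qed simp
    qed
    then show ?thesis unfolding A_def fac_args_def by simp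
  qed
  have K_sets: "K q q' \<in> sets ?P" if "q \<in> J" "q' \<in> J" for q q'
  proof -
    define Kc where "Kc = {y \<in> PiE {1..M} (\<lambda>_. UNIV::'a set). \<forall>x. v q x y = v q' x y}"
    have "Kc = (\<Inter>x\<in>UNIV. {y \<in> PiE {1..M} (\<lambda>_. UNIV::'a set). v q x y - v q' x y = 0})"
      unfolding Kc_def by auto
    moreover have "closedin (top_of_set (PiE {1..M} (\<lambda>_. UNIV::'a set))) (\<Inter>x\<in>UNIV. {y \<in> PiE {1..M} (\<lambda>_. UNIV::'a set). v q x y - v q' x y = 0})"
      by (intro closedin_INT continuous_closedin_preimage_constant continuous_on_diff b6 that) auto
    ultimately have "Kc \<in> sets (PiM {1..M} (\<lambda>_. lborel::'a measure))"
      by (simp add: closedin_PiM_sets)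
    from measurable_sets[OF Am this] have "A -` Kc \<inter> space ?P \<in> sets ?P" .
    moreover have "A -` Kc \<inter> space ?P = K q q'"
      unfolding K_def Kc_def A_def by (auto simp: fac_args_def)
    ultimately show ?thesis by simp
  qed
  show ?case
  proof (cases "\<exists>q\<in>Q. \<exists>q'\<in>Q. q \<noteq> q' \<and> 0 < emeasure ?P (K q q' \<inter> E)")
    case True
    then obtain q q' where qq: "q \<in> Q" "q' \<in> Q" "q \<noteq> q'" "0 < emeasure ?P (K q q' \<inter> E)" by blast
    define l' where "l' = M - r"
    have l': "1 \<le> l'" "l' \<le> M" "M + 1 - Suc r = l'" using rM unfolding l'_def by auto
    define un where "un y = (\<lambda>k\<in>{1..r}. y (k + l'))" for y :: "nat \<Rightarrow> 'a"
    let ?P' = "PiM {Suc l'..M} (\<lambda>_. lborel::'a measure)"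
    have bij: "bij_betw (\<lambda>k. k + l') {1..r} {Suc l'..M}"
      using rM unfolding l'_def bij_betw_def inj_on_def
    proof (auto simp: image_def)
      fix x assume "r < M" "Suc (M - r) \<le> x" "x \<le> M"
      then show "\<exists>xa\<in>{Suc 0..r}. x = xa + M - r"
        by (intro bexI[where x="x - (M - r)"]) auto
    qed
    have dist: "distr ?P' ?P un = ?P"
      unfolding un_def by (rule reindex_PiM_lborel[OF _ bij]) simp
    have unm: "un \<in> measurable ?P' ?P"
      unfolding un_def using bij
      by (intro measurable_restrict measurable_component_singleton) (auto simp: bij_betw_def)
    define Y where "Y = un -` (K q q' \<inter> E) \<inter> space ?P'"
    have KE: "K q q' \<inter> E \<in> sets ?P" using K_sets E_sets qq QJ by auto
    have Y_sets: "Y \<in> sets ?P'" unfolding Y_def by (rule measurable_sets[OF unm KE])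
    have "emeasure ?P' Y = emeasure (distr ?P' ?P un) (K q q' \<inter> E)"
      unfolding Y_def by (rule emeasure_distr[symmetric, OF unm KE])
    also have "\<dots> = emeasure ?P (K q q' \<inter> E)" by (simp only: dist)
    finally have Ypos: "0 < emeasure ?P' Y" using qq by simp
    have posY: "pos_meas (tupM {Suc l'..M}) Y"
      unfolding pos_meas_def tupM_def using Y_sets Ypos by simp
    have posU: "pos_meas lebesgue (UNIV::'a set)"
      unfolding pos_meas_def by simp
    let ?b = "\<lambda>i. \<beta> (i + Suc r - 1)"
    have r1: "1 \<le> Suc r" "Suc r \<le> M" using rM by auto
    have fc: "fac_args M (Suc r) z \<beta> = comb_args M l' (restrict (\<lambda>i. z (i - l')) {Suc l'..M}) ?b" for z
      by (rule fac_args_comb[OF r1, of z \<beta>, unfolded l'(3)])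
    have dep: "lin_dep_on (UNIV \<times> Y) {q, q'} (\<lambda>j (z, y). v j z (comb_args M l' y ?b))"
    proof (rule lin_dep_pair)
      fix p :: "'a \<times> (nat \<Rightarrow> 'a)" assume p: "p \<in> UNIV \<times> Y"
      obtain z y where zy: "p = (z, y)" by fastforce
      have "un y \<in> K q q'" using p zy unfolding Y_def by auto
      then have eq: "v q z (A (un y)) = v q' z (A (un y))" unfolding K_def by auto
      have "A (un y) = comb_args M l' (restrict (\<lambda>i. un y (i - l')) {Suc l'..M}) ?b"
        unfolding A_def by (rule fc)
      also have "\<dots> = comb_args M l' y ?b"
        by (rule comb_args_local) (auto simp: un_def l'_def)
      finally show "(case p of (z, y) \<Rightarrow> v q z (comb_args M l' y ?b)) = (case p of (z, y) \<Rightarrow> v q' z (comb_args M l' y ?b))"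
        using eq zy by simp
    qed (use qq in auto)
    from b5[OF l'(1,2) posU posY _ _ dep] QJ qq
    obtain j j' where jj: "j \<in> {q, q'}" "j' \<in> {q, q'}" "j \<noteq> j'"
      "\<forall>z. \<forall>y\<in>PiE {Suc l'..M} (\<lambda>_. UNIV). v j z (comb_args M l' y ?b) = v j' z (comb_args M l' y ?b)"
      by auto
    have "fac v M \<beta> (Suc r) j z = fac v M \<beta> (Suc r) j' z" for z
    proof -
      note fc[of z]
      then show ?thesis using jj(4) by (simp add: fac_def)
    qed
    moreover have "j \<in> (\<lambda>s. s (Suc r)) ` S0" "j' \<in> (\<lambda>s. s (Suc r)) ` S0"
      using jj qq unfolding Q_def by auto
    ultimately show ?thesis using jj(3) by (intro bexI[where x="Suc r"]) auto
  next
    case False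
    define PQ where "PQ = {(q, q'). q \<in> Q \<and> q' \<in> Q \<and> q \<noteq> q'}"
    define N where "N = (\<Union>p\<in>PQ. K (fst p) (snd p) \<inter> E)"
    have N_null: "N \<in> null_sets ?P"
      unfolding N_def
    proof (rule null_sets_UN')
      have "PQ \<subseteq> Q \<times> Q" unfolding PQ_def by blast
      then have "finite PQ" using finQ by (meson finite_SigmaI finite_subset)
      then show "countable PQ" by (rule countable_finite)
      fix p assume p: "p \<in> PQ"
      then obtain q q' where qq: "p = (q, q')" "q \<in> Q" "q' \<in> Q" "q \<noteq> q'" unfolding PQ_def by blast
      have "K q q' \<in> sets ?P" using K_sets qq QJ by blast
      then have "K (fst p) (snd p) \<inter> E \<in> sets ?P" using E_sets qq(1) by (simp add: sets.Int)
      moreover have "\<not> 0 < emeasure ?P (K q q' \<inter> E)" using False qq by blast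
      then have "emeasure ?P (K (fst p) (snd p) \<inter> E) = 0" using qq(1) by (simp add: not_gr_zero)
      ultimately show "K (fst p) (snd p) \<inter> E \<in> null_sets ?P" by (intro null_setsI)
    qed
    define E' where "E' = E - N"
    have E'_sets: "E' \<in> sets ?P" unfolding E'_def using E_sets null_setsD2[OF N_null] by (rule sets.Diff)
    have E'_pos: "0 < emeasure ?P E'"
      unfolding E'_def using emeasure_Diff_null_set[OF N_null E_sets] E_pos by simp
    have Cz: "C q w = 0" if w: "w \<in> E'" and q: "q \<in> Q" for w q
    proof (rule ccontr)
      assume Cnz: "C q w \<noteq> 0"
      have wsp: "w \<in> space ?P" using w unfolding E'_def E_def by auto
      have posZ: "pos_meas lebesgue (Zs w)"
        using Zs_sets[OF wsp] w G_Zs[OF wsp] unfolding pos_meas_def E'_def E_def by auto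
      have posY: "pos_meas (tupM {Suc M..M}) {\<lambda>_. undefined :: 'a}"
        unfolding pos_meas_def tupM_def by (simp add: sets_PiM_empty)
      have dep: "lin_dep_on (Zs w \<times> {\<lambda>_. undefined}) Q (\<lambda>j (z, y). v j z (comb_args M M y (A w)))"
        unfolding lin_dep_on_def
      proof (intro exI[where x="\<lambda>q. C q w"] conjI ballI)
        show "\<exists>q\<in>Q. C q w \<noteq> 0" using q Cnz by blast
        fix p :: "'a \<times> (nat \<Rightarrow> 'a)" assume p: "p \<in> Zs w \<times> {\<lambda>_. undefined}"
        obtain x y where xy: "p = (x, y)" by fastforce
        have "(\<Sum>q\<in>Q. C q w * v q x (A w)) = 0"
          using key_sum[of w x] c(2) p xy unfolding Zs_def by auto
        then show "(\<Sum>j\<in>Q. C j w * (case p of (z, y) \<Rightarrow> v j z (comb_args M M y (A w)))) = 0"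
          using xy by (simp add: A_def comb_args_M)
      qed
      have M1: "1 \<le> M" using rM by simp
      from b5[of M "Zs w" "{\<lambda>_. undefined}" Q "A w", OF M1 order_refl posZ posY finQ QJ dep]
      obtain q1 q2 where q12: "q1 \<in> Q" "q2 \<in> Q" "q1 \<noteq> q2"
        "\<forall>z. \<forall>y\<in>PiE {Suc M..M} (\<lambda>_. UNIV). v q1 z (comb_args M M y (A w)) = v q2 z (comb_args M M y (A w))"
        by blast
      have "\<forall>x. v q1 x (A w) = v q2 x (A w)"
        using q12(4) by (auto simp: A_def comb_args_M)
      then have "w \<in> K q1 q2 \<inter> E" using wsp w unfolding K_def E'_def by auto
      then have "w \<in> N" using q12 unfolding N_def PQ_def by force
      then show False using w unfolding E'_def by auto
    qed
    obtain s0 where s0: "s0 \<in> S0" "c s0 \<noteq> 0" using c(1) by blast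
    define q0 where "q0 = s0 (Suc r)"
    define S1 where "S1 = {s \<in> S0. s (Suc r) = q0}"
    define S0' where "S0' = (\<lambda>s. restrict s {1..r}) ` S1"
    define c' where "c' t = c (t(Suc r := q0))" for t :: "nat \<Rightarrow> 'j"
    have back_eq: "(restrict s {1..r})(Suc r := q0) = s" if "s \<in> S1" for s
    proof
      fix i
      have "s \<in> PiE {1..Suc r} (\<lambda>_. J)" "s (Suc r) = q0" using that Suc.prems(5) unfolding S1_def by auto
      then show "((restrict s {1..r})(Suc r := q0)) i = s i"
        by (cases "i = Suc r") (auto simp: PiE_def extensional_def)
    qed
    have inj: "inj_on (\<lambda>s. restrict s {1..r}) S1"
      by (rule inj_onI) (metis back_eq)
    have S0'_sub: "S0' \<subseteq> PiE {1..r} (\<lambda>_. J)"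
      using Suc.prems(5) unfolding S0'_def S1_def by (auto simp: PiE_iff)
    have S0'_fin: "finite S0'" using Suc.prems(4) unfolding S0'_def S1_def by simp
    have S0'_dep: "lin_dep_on E' S0' (\<lambda>s z. \<Prod>l\<in>{1..r}. fac v M \<beta> l (s l) z)"
      unfolding lin_dep_on_def
    proof (intro exI[where x=c'] conjI ballI)
      have "s0 \<in> S1" using s0 unfolding S1_def q0_def by auto
      then show "\<exists>t\<in>S0'. c' t \<noteq> 0"
        using s0 back_eq unfolding S0'_def c'_def by (intro bexI[where x="restrict s0 {1..r}"]) auto
      fix w assume w: "w \<in> E'"
      have "(\<Sum>t\<in>S0'. c' t * (\<Prod>l\<in>{1..r}. fac v M \<beta> l (t l) w))
          = (\<Sum>s\<in>S1. c' (restrict s {1..r}) * (\<Prod>l\<in>{1..r}. fac v M \<beta> l (restrict s {1..r} l) w))"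
        unfolding S0'_def by (rule sum.reindex[OF inj, unfolded comp_def])
      also have "\<dots> = (\<Sum>s\<in>S1. c s * (\<Prod>l\<in>{1..r}. fac v M \<beta> l (s l) w))"
        unfolding c'_def using back_eq by (intro sum.cong refl) (auto intro!: prod.cong)
      also have "\<dots> = C q0 w" unfolding C_def S1_def ..
      also have "\<dots> = 0" using Cz[OF w] s0 unfolding Q_def q0_def by auto
      finally show "(\<Sum>t\<in>S0'. c' t * (\<Prod>l\<in>{1..r}. fac v M \<beta> l (t l) w)) = 0" .
    qed
    from Suc.IH[OF less_imp_le[OF rM] E'_sets E'_pos S0'_fin S0'_sub S0'_dep]
    obtain l j j' where ljj: "l \<in> {1..r}" "j \<in> (\<lambda>s. s l) ` S0'" "j' \<in> (\<lambda>s. s l) ` S0'" "j \<noteq> j'"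
      "\<forall>z. fac v M \<beta> l j z = fac v M \<beta> l j' z" by blast
    have "(\<lambda>s. s l) ` S0' \<subseteq> (\<lambda>s. s l) ` S0"
      using ljj(1) unfolding S0'_def S1_def by auto
    then have "j \<in> (\<lambda>s. s l) ` S0" "j' \<in> (\<lambda>s. s l) ` S0" using ljj(2,3) by blast+
    then show ?thesis using ljj(1,4,5) by (intro bexI[where x=l]) (blast, simp)
  qed
qed


theorem lemma3:
  fixes v :: "'j \<Rightarrow> 'a::euclidean_space \<Rightarrow> (nat \<Rightarrow> 'a) \<Rightarrow> real"
    and J :: "'j set" and M :: nat
  assumes M2: "M \<ge> 2"
    and b1: "\<And>j z y. j \<in> J \<Longrightarrow> y \<in> PiE {1..M} (\<lambda>_. UNIV) \<Longrightarrow> v j z y > 0"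
    and b4: "\<exists>Y. full_meas (tupM {1..M}) Y \<and>
              (\<forall>Y' Z J0. Y' \<subseteq> Y \<longrightarrow> pos_meas (tupM {1..M}) Y' \<longrightarrow> pos_meas lebesgue Z \<longrightarrow>
                 finite J0 \<longrightarrow> J0 \<subseteq> J \<longrightarrow>
                 \<not> lin_dep_on (Z \<times> Y') J0 (\<lambda>j (z, y). v j z y))"
    and b5: "\<And>l \<beta> Z Y J0. 1 \<le> l \<Longrightarrow> l \<le> M \<Longrightarrow> pos_meas lebesgue Z \<Longrightarrow>
              pos_meas (tupM {Suc l..M}) Y \<Longrightarrow> finite J0 \<Longrightarrow> J0 \<subseteq> J \<Longrightarrow>
              lin_dep_on (Z \<times> Y) J0 (\<lambda>j (z, y). v j z (comb_args M l y \<beta>)) \<Longrightarrow>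
              (\<exists>j\<in>J0. \<exists>j'\<in>J0. j \<noteq> j' \<and>
                 (\<forall>z. \<forall>y\<in>PiE {Suc l..M} (\<lambda>_. UNIV).
                    v j z (comb_args M l y \<beta>) = v j' z (comb_args M l y \<beta>)))"
    and b6: "\<And>j z. j \<in> J \<Longrightarrow> continuous_on (PiE {1..M} (\<lambda>_. UNIV)) (v j z)"
  shows "\<forall>r \<beta> Zr S0. 2 \<le> r \<longrightarrow> r \<le> M \<longrightarrow> pos_meas (tupM {1..r}) Zr \<longrightarrow>
           finite S0 \<longrightarrow> S0 \<subseteq> PiE {1..r} (\<lambda>_. J) \<longrightarrow>
           lin_dep_on Zr S0 (\<lambda>s z. \<Prod>l\<in>{1..r}. fac v M \<beta> l (s l) z) \<longrightarrow>
           (\<exists>l\<in>{1..r}. lin_dep_on ((\<lambda>z. restrict z {1..l}) ` Zr) ((\<lambda>s. s l) ` S0)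
                          (\<lambda>j z. fac v M \<beta> l j z))"
proof (intro allI impI)
  fix r \<beta> Zr and S0 :: "(nat \<Rightarrow> 'j) set"
  assume r2: "2 \<le> r" and rM: "r \<le> M" and pm: "pos_meas (tupM {1..r}) Zr"
    and fin: "finite S0" and sub: "S0 \<subseteq> PiE {1..r} (\<lambda>_. J)"
    and dep: "lin_dep_on Zr S0 (\<lambda>s z. \<Prod>l\<in>{1..r}. fac v M \<beta> l (s l) z)"
  let ?P = "PiM {1..r} (\<lambda>_. lborel::'a measure)"
  have Zc: "Zr \<in> sets (completion ?P)" and Zpos: "0 < emeasure (completion ?P) Zr"
    using pm unfolding pos_meas_def tupM_def by auto
  define Z0 where "Z0 = main_part ?P Zr"
  have Z0s: "Z0 \<in> sets ?P" unfolding Z0_def using Zc by simp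
  have Z0sub: "Z0 \<subseteq> Zr" unfolding Z0_def using main_part_null_part_Un[OF Zc] by blast
  have Z0pos: "0 < emeasure ?P Z0" unfolding Z0_def using Zpos Zc by simp
  have dep0: "lin_dep_on Z0 S0 (\<lambda>s z. \<Prod>l\<in>{1..r}. fac v M \<beta> l (s l) z)"
    using dep Z0sub unfolding lin_dep_on_def by blast
  have ex: "\<exists>l\<in>{1..r}. \<exists>j\<in>(\<lambda>s. s l) ` S0. \<exists>j'\<in>(\<lambda>s. s l) ` S0. j \<noteq> j' \<and>
       (\<forall>z. fac v M \<beta> l j z = fac v M \<beta> l j' z)"
    apply (rule main_ind[where v=v and J=J and M=M and \<beta>=\<beta> and r=r])
    apply (rule b5; assumption)
    apply (rule b6; assumption)
    apply (rule rM)
    apply (rule Z0s)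
    apply (rule Z0pos)
    apply (rule fin)
    apply (rule sub)
    apply (rule dep0)
    done
  then obtain l j j' where ljj: "l \<in> {1..r}" "j \<in> (\<lambda>s. s l) ` S0" "j' \<in> (\<lambda>s. s l) ` S0" "j \<noteq> j'"
    "\<forall>z. fac v M \<beta> l j z = fac v M \<beta> l j' z" by blast
  have "lin_dep_on ((\<lambda>z. restrict z {1..l}) ` Zr) ((\<lambda>s. s l) ` S0) (\<lambda>j z. fac v M \<beta> l j z)"
  proof (rule lin_dep_pair)
    show "finite ((\<lambda>s. s l) ` S0)" using fin by simp
    show "j \<in> (\<lambda>s. s l) ` S0" "j' \<in> (\<lambda>s. s l) ` S0" "j \<noteq> j'" using ljj by blast+
    fix x show "fac v M \<beta> l j x = fac v M \<beta> l j' x" using ljj(5) by blast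
  qed
  then show "\<exists>l\<in>{1..r}. lin_dep_on ((\<lambda>z. restrict z {1..l}) ` Zr) ((\<lambda>s. s l) ` S0)
                          (\<lambda>j z. fac v M \<beta> l j z)" using ljj(1) by blast
qed

end
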